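(* Let $X$ be a topological vector space over $\mathbb{K}$ ($\mathbb{K}=\mathbb{R}$ or $\mathbb{C}$) and let $\alpha$ be an infinite cardinal with $w(X)\le \dim(X)=\alpha$. Then there is a family $\{Y_\kappa\}_{\kappa<\alpha}$ of linear subspaces of $X$ such that: (1) each $Y_\kappa$ is a dense linear subspace of $X$ with $\dim(Y_\kappa)=\alpha$; (2) the family $\{Y_\kappa\}_{\kappa<\alpha}$ is linearly independent, i.e., the sum $\sum_{\kappa<\alpha}Y_\kappa$ is direct (in particular $Y_{\kappa_1}\cap Y_{\kappa_2}=\{0\}$ whenever $\kappa_1\neq\kappa_2$).
   Context: A topological vector space is a vector space with a topology making addition and scalar multiplication continuous. The weight $w(X)$ of a topological space is the smallest cardinality of a base for its topology. Indices $\kappa<\alpha$ range over ordinals less than $\alpha$. *)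

theory Defs
  imports "HOL-Analysis.Analysis" "HOL-Library.Equipollence"
begin

definition is_tvs :: "('k::{field,topological_space} \<Rightarrow> 'a::{ab_group_add,topological_space} \<Rightarrow> 'a) \<Rightarrow> bool" where
  "is_tvs sc \<longleftrightarrow> vector_space sc
     \<and> continuous_on UNIV (\<lambda>p::'a \<times> 'a. fst p + snd p)
     \<and> continuous_on UNIV (\<lambda>p::'k \<times> 'a. sc (fst p) (snd p))"

definition weight_le :: "'a::topological_space itself \<Rightarrow> 'i set \<Rightarrow> bool" where
  "weight_le _ I \<longleftrightarrow> (\<exists>\<B>::'a set set. topological_basis \<B> \<and> \<B> \<lesssim> I)"

definition has_dim :: "('k::field \<Rightarrow> 'a::ab_group_add \<Rightarrow> 'a) \<Rightarrow> 'a set \<Rightarrow> 'i set \<Rightarrow> bool" where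
  "has_dim sc Y I \<longleftrightarrow> (\<exists>B. B \<subseteq> Y \<and> \<not> module.dependent sc B \<and> module.span sc B = Y \<and> B \<approx> I)"

definition indep_family :: "('i \<Rightarrow> 'a::ab_group_add set) \<Rightarrow> 'i set \<Rightarrow> bool" where
  "indep_family Y I \<longleftrightarrow> (\<forall>F y. finite F \<longrightarrow> F \<subseteq> I \<longrightarrow> (\<forall>k\<in>F. y k \<in> Y k) \<longrightarrow> sum y F = 0
      \<longrightarrow> (\<forall>k\<in>F. y k = 0))"

text \<open>The theorem for a given scalar field: X = UNIV::'a set, alpha = |I|.\<close>
definition dense_subspaces_claim :: "('k::{field,topological_space} \<Rightarrow> 'a::{ab_group_add,topological_space} \<Rightarrow> 'a) \<Rightarrow> 'i set \<Rightarrow> bool" where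
  "dense_subspaces_claim sc I \<longleftrightarrow>
    (is_tvs sc \<and> infinite I \<and> weight_le TYPE('a) I \<and> has_dim sc UNIV I \<longrightarrow>
     (\<exists>Y :: 'i \<Rightarrow> 'a set.
        (\<forall>k\<in>I. module.subspace sc (Y k) \<and> closure (Y k) = UNIV \<and> has_dim sc (Y k) I)
        \<and> indep_family Y I))"

end

theory Submission
  imports Defs
begin
unbundle cardinal_syntax

context vector_space begin
lemma indep_spans:
  assumes B: "independent B" and F: "finite F" and PB: "\<forall>k\<in>F. P k \<subseteq> B"
    and disj: "\<forall>k\<in>F. \<forall>k'\<in>F. k \<noteq> k' \<longrightarrow> P k \<inter> P k' = {}"
    and y: "\<forall>k\<in>F. y k \<in> span (P k)" and s: "sum y F = 0" and k0: "k0 \<in> F"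
  shows "y k0 = 0"
proof -
  let ?R = "representation B"
  have yB: "y k \<in> span B" if "k \<in> F" for k using y PB that span_mono by blast
  have Rk: "?R (y k) = representation (P k) (y k)" if "k \<in> F" for k
    using representation_extend[OF B] y PB that by blast
  have "?R (sum y F) = (\<lambda>b. \<Sum>k\<in>F. ?R (y k) b)"
    using representation_sum[OF B] yB by blast
  then have sum0: "(\<Sum>k\<in>F. ?R (y k) b) = 0" for b
    using s by (metis representation_zero)
  have "?R (y k0) b = 0" for b
  proof (cases "b \<in> P k0")
    case True
    have "(\<Sum>k\<in>F. ?R (y k) b) = ?R (y k0) b + (\<Sum>k\<in>F-{k0}. ?R (y k) b)"
      using F k0 by (simp add: sum.remove)
    moreover have "?R (y k) b = 0" if "k \<in> F-{k0}" for k
    proof -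
      have "b \<notin> P k" using disj True that k0 by blast
      then show ?thesis using Rk[of k] that representation_ne_zero by fastforce
    qed
    ultimately show ?thesis using sum0[of b] by simp
  next
    case False
    then show ?thesis using Rk[OF k0] representation_ne_zero by fastforce
  qed
  then have "?R (y k0) = (\<lambda>b. 0)" by auto
  then show ?thesis using sum_nonzero_representation_eq[OF B yB[OF k0]] by simp
qed
end

lemma wo_finite_max:
  assumes "Well_order r" "finite D" "D \<noteq> {}" "D \<subseteq> Field r"
  shows "\<exists>j\<in>D. \<forall>d\<in>D. (d,j) \<in> r"
  using assms(2,3,4)
proof (induction rule: finite_ne_induct)
  case (singleton x)
  then show ?case using assms(1) by (auto simp: well_order_on_def linear_order_on_def partial_order_on_def preorder_on_def refl_on_def)
next
  case (insert x D)
  then obtain m where m: "m \<in> D" "\<forall>d\<in>D. (d,m) \<in> r" by auto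
  have tot: "(x,m) \<in> r \<or> (m,x) \<in> r" and rx: "(x,x) \<in> r" and tr: "trans r"
    using assms(1) insert m unfolding well_order_on_def linear_order_on_def partial_order_on_def preorder_on_def refl_on_def total_on_def
    by auto
  show ?case
  proof (cases "(x,m) \<in> r")
    case True then show ?thesis using m by auto
  next
    case False then have "(m,x) \<in> r" using tot by auto
    then show ?thesis using m rx tr by (auto dest: transD)
  qed
qed

lemma fin_lt_inf: "finite X \<Longrightarrow> infinite Y \<Longrightarrow> |X| <o |Y|"
  using finite_ordLess_infinite[OF card_of_Well_order card_of_Well_order]
  by (simp add: Field_card_of)

lemma small_union_finite:
  assumes "infinite (I::'i set)" "|A| <o |I|" "\<forall>x\<in>A. finite (T x)"
  shows "|\<Union>x\<in>A. T x| <o |I|"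
proof (cases "finite A")
  case True
  then have "finite (\<Union>x\<in>A. T x)" using assms(3) by auto
  then show ?thesis using finite_ordLess_infinite[OF card_of_Well_order card_of_Well_order] assms(1)
    by (simp add: Field_card_of)
next
  case False
  have "\<forall>x\<in>A. |T x| \<le>o |A|"
  proof
    fix x assume "x \<in> A"
    then show "|T x| \<le>o |A|" using fin_lt_inf[of "T x" A] False assms(3) ordLess_imp_ordLeq by blast
  qed
  then have "|\<Union>x\<in>A. T x| \<le>o |A|"
    using card_of_UNION_ordLeq_infinite[of A A T] False card_of_refl ordIso_imp_ordLeq by blast
  then show ?thesis using assms(2) ordLeq_ordLess_trans by blast
qed

lemma tvs_absorb:
  fixes sc :: "'k::{field,perfect_space} \<Rightarrow> 'a::{ab_group_add,topological_space} \<Rightarrow> 'a"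
  assumes tvs: "is_tvs sc" and U: "open U" "u \<in> U"
  shows "\<exists>t. t \<noteq> 0 \<and> u + sc t b \<in> U"
proof -
  interpret V: vector_space sc using tvs by (simp add: is_tvs_def)
  have c1: "continuous_on UNIV (\<lambda>p::'a\<times>'a. fst p + snd p)"
    and c2: "continuous_on UNIV (\<lambda>p::'k\<times>'a. sc (fst p) (snd p))" using tvs by (auto simp: is_tvs_def)
  have c3: "continuous_on UNIV (\<lambda>t::'k. sc t b)"
  proof -
    have "continuous_on UNIV (\<lambda>t::'k. (t,b))" by (intro continuous_intros)
    then show ?thesis using continuous_on_compose2[OF c2, of UNIV "\<lambda>t. (t,b)"] by simp
  qed
  have c4: "continuous_on UNIV (\<lambda>t::'k. u + sc t b)"
  proof -
    have "continuous_on UNIV (\<lambda>t::'k. (u, sc t b))" using c3 by (intro continuous_intros)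
    then show ?thesis using continuous_on_compose2[OF c1, of UNIV "\<lambda>t. (u, sc t b)"] by simp
  qed
  let ?W = "(\<lambda>t. u + sc t b) -` U"
  have oW: "open ?W" using c4 U(1) continuous_on_open_vimage[of UNIV] by auto
  have "0 \<in> ?W" using U(2) by simp
  show ?thesis
  proof (rule ccontr)
    assume "\<not> ?thesis"
    then have "?W = {0}" using \<open>0 \<in> ?W\<close> by auto
    then show False using oW not_open_singleton by metis
  qed
qed

lemma tvs_open_subspace:
  fixes sc :: "'k::{field,perfect_space} \<Rightarrow> 'a::{ab_group_add,topological_space} \<Rightarrow> 'a"
  assumes tvs: "is_tvs sc" and U: "open U" "U \<noteq> {}" and S: "module.subspace sc S" "U \<subseteq> S"
  shows "S = UNIV"
proof -
  interpret V: vector_space sc using tvs by (simp add: is_tvs_def)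
  obtain u where u: "u \<in> U" using U by auto
  have "b \<in> S" for b
  proof -
    obtain t where t: "t \<noteq> 0" "u + sc t b \<in> U" using tvs_absorb[OF tvs U(1) u] by auto
    then have "(u + sc t b) - u \<in> S" using S u V.subspace_diff by blast
    then have "sc t b \<in> S" by simp
    then have "sc (inverse t) (sc t b) \<in> S" using S V.subspace_scale by blast
    then show ?thesis using t by simp
  qed
  then show ?thesis by auto
qed

lemma main_claim:
  fixes sc :: "'k::{field,perfect_space} \<Rightarrow> 'a::{ab_group_add,topological_space} \<Rightarrow> 'a"
    and I :: "'i set"
  shows "dense_subspaces_claim sc I"
  unfolding dense_subspaces_claim_def
proof (intro impI, elim conjE)
  assume tvs: "is_tvs sc" and infI: "infinite I" and wI: "weight_le TYPE('a) I"
    and dI: "has_dim sc UNIV I"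
  interpret V: vector_space sc using tvs by (simp add: is_tvs_def)
  obtain H where H: "V.independent H" "V.span H = UNIV" "H \<approx> I"
    using dI unfolding has_dim_def by auto
  obtain BB :: "'a set set" where BB: "topological_basis BB" "BB \<lesssim> I"
    using wI by (auto simp: weight_le_def)
  define N where "N = BB - {{}}"
  obtain B0 where B0: "B0 \<in> BB" "(undefined::'a) \<in> B0" "B0 \<subseteq> UNIV"
    by (rule topological_basisE[OF BB(1) open_UNIV UNIV_I])
  have "B0 \<in> N" using B0 unfolding N_def by auto
  then have Nne: "N \<noteq> {}" by auto
  have "N \<lesssim> I" using lepoll_trans[OF subset_imp_lepoll[of N BB] BB(2)] unfolding N_def by blast
  then obtain h where h: "N \<subseteq> h ` I" by (auto simp: lepoll_iff)
  obtain n0 where n0: "n0 \<in> N" using Nne by auto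
  define Uf where "Uf i = (if h i \<in> N then h i else n0)" for i
  have UfN: "Uf i \<in> N" for i using n0 by (simp add: Uf_def)
  have Uf_open: "open (Uf i)" for i
  proof -
    have "Uf i \<in> BB" using UfN[of i] unfolding N_def by simp
    then show ?thesis using topological_basis_open[OF BB(1)] by simp
  qed
  have Uf_ne: "Uf i \<noteq> {}" for i using UfN[of i] unfolding N_def by auto
  have Uf_dense: "\<exists>i\<in>I. Uf i \<subseteq> W" if W: "open W" "W \<noteq> {}" for W
  proof -
    obtain x where "x \<in> W" using W(2) by auto
    then obtain B where B: "B \<in> BB" "x \<in> B" "B \<subseteq> W"
      by (rule topological_basisE[OF BB(1) W(1)])
    then have "B \<in> N" unfolding N_def by auto
    then obtain i where "i \<in> I" "B = h i" using h by auto
    then have "Uf i = B" using \<open>B \<in> N\<close> unfolding Uf_def by simp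
    then show ?thesis using B(3) \<open>i \<in> I\<close> by blast
  qed
  have "|I \<times> I| =o |I|" using card_of_Times_same_infinite infI by blast
  then obtain g where g: "bij_betw g I (I \<times> I)"
    using card_of_ordIso ordIso_symmetric by blast
  define r where "r = |I|"
  have wo: "Well_order r" unfolding r_def by (rule card_of_Well_order)
  have Fr: "Field r = I" unfolding r_def by (rule Field_card_of)
  have co: "Card_order r" unfolding r_def by (rule card_of_Card_order)
  have wf: "wf (r - Id)" using wo by (simp add: well_order_on_def)
  define F where "F = (\<lambda>(f::'i \<Rightarrow> 'a) j. SOME y. y \<in> Uf (snd (g j)) \<and> y \<notin> V.span (f ` underS r j))"
  define f where "f = wfrec (r - Id) F"
  have HI: "|H| =o |I|" using H(3) card_of_ordIso eqpoll_def by blast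
  have small: "V.span A \<noteq> UNIV" if A: "|A| <o |I|" for A
  proof
    assume spA: "V.span A = UNIV"
    have "\<exists>T. finite T \<and> T \<subseteq> H \<and> x \<in> V.span T" for x
    proof -
      have "x \<in> V.span H" using H(2) by simp
      then show ?thesis unfolding V.span_explicit by blast
    qed
    then obtain T where T: "\<And>x. finite (T x) \<and> T x \<subseteq> H \<and> x \<in> V.span (T x)" by metis
    define E where "E = (\<Union>x\<in>A. T x)"
    have Esm: "|E| <o |I|" unfolding E_def by (rule small_union_finite[OF infI A]) (use T in blast)
    have "A \<subseteq> V.span E"
    proof
      fix x assume "x \<in> A"
      then have "T x \<subseteq> E" by (auto simp: E_def)
      then show "x \<in> V.span E" using T[of x] V.span_mono by blast
    qed
    then have "V.span A \<subseteq> V.span E" using V.span_minimal V.subspace_span by blast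
    then have spE: "V.span E = UNIV" using spA by auto
    have "\<not> H \<subseteq> E"
    proof
      assume "H \<subseteq> E"
      then have "|H| \<le>o |E|" by (rule card_of_mono1)
      then have "|I| \<le>o |E|" using HI ordIso_symmetric ordIso_ordLeq_trans by blast
      then have "|I| <o |I|" using Esm ordLeq_ordLess_trans by blast
      then show False using ordLess_irreflexive by blast
    qed
    then obtain b where b: "b \<in> H" "b \<notin> E" by auto
    have "E \<subseteq> H - {b}" using T b by (auto simp: E_def)
    then have "b \<in> V.span (H - {b})" using spE V.span_mono by blast
    then have "V.dependent H" using b(1) V.dependent_def by blast
    then show False using H(1) by simp
  qed
  have fj_eq: "f j = (SOME y. y \<in> Uf (snd (g j)) \<and> y \<notin> V.span (f ` underS r j))" for j
  proof -
    have "f j = F (cut f (r - Id) j) j" using wfrec[OF wf] f_def by metis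
    moreover have "cut f (r - Id) j ` underS r j = f ` underS r j"
      by (auto simp: cut_apply underS_def image_iff)
    ultimately show ?thesis by (simp add: F_def)
  qed
  have step: "f j \<in> Uf (snd (g j)) \<and> f j \<notin> V.span (f ` underS r j)" if j: "j \<in> I" for j
  proof -
    have "|underS r j| <o r" using card_of_underS[OF co] Fr j by blast
    moreover have "|f ` underS r j| \<le>o |underS r j|" by (rule card_of_image)
    ultimately have "|f ` underS r j| <o |I|" unfolding r_def using ordLeq_ordLess_trans by blast
    then have "V.span (f ` underS r j) \<noteq> UNIV" using small by blast
    moreover have "V.subspace (V.span (f ` underS r j))" by simp
    ultimately have "\<not> Uf (snd (g j)) \<subseteq> V.span (f ` underS r j)"
      using tvs_open_subspace[OF tvs Uf_open Uf_ne] by metis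
    then have "\<exists>y. y \<in> Uf (snd (g j)) \<and> y \<notin> V.span (f ` underS r j)" by blast
    then show ?thesis unfolding fj_eq[of j] by (rule someI_ex)
  qed
  have tot: "total_on I r" using wo Fr by (simp add: well_order_on_def linear_order_on_def)
  have inj: "inj_on f I"
  proof (rule inj_onI, rule ccontr)
    fix i j assume ij: "i \<in> I" "j \<in> I" "f i = f j" "i \<noteq> j"
    have "(i,j) \<in> r \<or> (j,i) \<in> r" using tot ij by (auto simp: total_on_def)
    then show False
    proof
      assume "(i,j) \<in> r"
      then have "i \<in> underS r j" using ij by (auto simp: underS_def)
      then have "f i \<in> V.span (f ` underS r j)" using V.span_base by blast
      then show False using step[OF ij(2)] ij(3) by simp
    next
      assume "(j,i) \<in> r"
      then have "j \<in> underS r i" using ij by (auto simp: underS_def)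
      then have "f j \<in> V.span (f ` underS r i)" using V.span_base by blast
      then show False using step[OF ij(1)] ij(3) by simp
    qed
  qed
  have indep: "V.independent (f ` I)"
  proof
    assume "V.dependent (f ` I)"
    then obtain T u v where T: "finite T" "T \<subseteq> f ` I" "(\<Sum>v\<in>T. sc (u v) v) = 0" "v \<in> T" "u v \<noteq> 0"
      unfolding V.dependent_explicit by blast
    define T' where "T' = {v\<in>T. u v \<noteq> 0}"
    have T'T: "T' \<subseteq> T" unfolding T'_def by blast
    have "(\<Sum>v\<in>T. sc (u v) v) = (\<Sum>v\<in>T'. sc (u v) v)"
      by (rule sum.mono_neutral_right[OF T(1) T'T]) (simp add: T'_def)
    then have T'0: "(\<Sum>v\<in>T'. sc (u v) v) = 0" using T(3) by simp
    define D where "D = f -` T' \<inter> I"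
    have finT': "finite T'" using T(1) T'T finite_subset by blast
    then have finD: "finite D" unfolding D_def by (rule finite_vimage_IntI[OF _ inj])
    have DT': "f ` D = T'" using T(2) T'T unfolding D_def by blast
    have "v \<in> T'" using T(4,5) unfolding T'_def by blast
    then have "D \<noteq> {}" using DT' by blast
    then obtain j where jD: "j \<in> D" and jmax: "\<forall>d\<in>D. (d,j) \<in> r"
      using wo_finite_max[OF wo finD _] Fr unfolding D_def by blast
    have jI: "j \<in> I" using jD D_def by auto
    have fjT': "f j \<in> T'" using jD unfolding D_def by blast
    let ?c = "u (f j)" and ?s = "\<Sum>v\<in>T'-{f j}. sc (u v) v"
    have c0: "?c \<noteq> 0" using fjT' unfolding T'_def by blast
    have "sc ?c (f j) + ?s = 0"
      using T'0 sum.remove[OF finT' fjT', of "\<lambda>v. sc (u v) v"] by simp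
    then have "sc ?c (f j) = - ?s" by (simp add: eq_neg_iff_add_eq_0)
    then have "sc (inverse ?c) (sc ?c (f j)) = sc (inverse ?c) (- ?s)" by simp
    then have fjx: "f j = sc (inverse ?c) (- ?s)" using c0 by simp
    have sub: "T' - {f j} \<subseteq> f ` underS r j"
    proof
      fix w assume w: "w \<in> T' - {f j}"
      then obtain d where d: "d \<in> D" "w = f d" using DT' by auto
      then have "d \<noteq> j" using w by auto
      then have "d \<in> underS r j" using jmax d by (auto simp: underS_def)
      then show "w \<in> f ` underS r j" using d by auto
    qed
    have "?s \<in> V.span (T' - {f j})"
      by (intro V.span_sum V.span_scale V.span_base) auto
    then have "?s \<in> V.span (f ` underS r j)" using V.span_mono[OF sub] by blast
    then have "sc (inverse ?c) (- ?s) \<in> V.span (f ` underS r j)" by (intro V.span_scale V.span_neg)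
    then have "f j \<in> V.span (f ` underS r j)" by (subst fjx)
    then show False using step[OF jI] by simp
  qed
  define Jk where "Jk k = {j \<in> I. fst (g j) = k}" for k
  define Y where "Y k = V.span (f ` Jk k)" for k
  have JkI: "Jk k \<approx> I" if k: "k \<in> I" for k
  proof -
    have gI: "g ` I = I \<times> I" using g by (simp add: bij_betw_def)
    have "g ` Jk k = {k} \<times> I"
    proof
      show "g ` Jk k \<subseteq> {k} \<times> I"
      proof
        fix p assume "p \<in> g ` Jk k"
        then obtain j where j: "j \<in> I" "fst (g j) = k" "p = g j" by (auto simp: Jk_def)
        moreover have "g j \<in> I \<times> I" using gI j(1) by blast
        ultimately show "p \<in> {k} \<times> I" by (simp add: mem_Times_iff)
      qed
      show "{k} \<times> I \<subseteq> g ` Jk k"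
      proof
        fix p assume p: "p \<in> {k} \<times> I"
        then have "p \<in> g ` I" using gI k by blast
        then obtain j where j: "j \<in> I" "p = g j" by blast
        then have "j \<in> Jk k" using p by (auto simp: Jk_def)
        then show "p \<in> g ` Jk k" using j by blast
      qed
    qed
    moreover have sub: "Jk k \<subseteq> I" unfolding Jk_def by blast
    ultimately have "bij_betw g (Jk k) ({k} \<times> I)"
      using bij_betw_subset[OF g] by blast
    then have "Jk k \<approx> {k} \<times> I" unfolding eqpoll_def by blast
    then show ?thesis by (rule eqpoll_trans[OF _ times_singleton_eqpoll])
  qed
  show "\<exists>Y. (\<forall>k\<in>I. V.subspace (Y k) \<and> closure (Y k) = UNIV \<and> has_dim sc (Y k) I) \<and> indep_family Y I"
  proof (intro exI[of _ Y] conjI ballI)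
    fix k assume k: "k \<in> I"
    show "V.subspace (Y k)" unfolding Y_def by simp
    show "has_dim sc (Y k) I" unfolding has_dim_def
    proof (intro exI[of _ "f ` Jk k"] conjI)
      show "f ` Jk k \<subseteq> Y k" unfolding Y_def by (rule V.span_superset)
      show "V.independent (f ` Jk k)" using indep V.dependent_mono[of "f ` Jk k" "f ` I"]
        unfolding Jk_def by auto
      show "V.span (f ` Jk k) = Y k" unfolding Y_def ..
      have "inj_on f (Jk k)" using inj unfolding Jk_def by (rule inj_on_subset) auto
      then have "f ` Jk k \<approx> Jk k" by (rule inj_on_image_eqpoll_self)
      then show "f ` Jk k \<approx> I" using JkI[OF k] eqpoll_trans by blast
    qed
    have meet: "W \<inter> Y k \<noteq> {}" if W: "open W" "W \<noteq> {}" for W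
    proof -
      obtain i where i: "i \<in> I" "Uf i \<subseteq> W" using Uf_dense[OF W] by blast
      have "(k,i) \<in> I \<times> I" using k i(1) by simp
      then have "(k,i) \<in> g ` I" using g by (simp add: bij_betw_def)
      then obtain j where j: "j \<in> I" "(k,i) = g j" by (rule imageE)
      then have "j \<in> Jk k" unfolding Jk_def by (metis (mono_tags) fst_conv mem_Collect_eq)
      then have "f j \<in> Y k" unfolding Y_def by (intro V.span_base imageI)
      moreover have "f j \<in> Uf (snd (g j))" using step[OF j(1)] by blast
      then have "f j \<in> W" using j(2) i(2) by (metis snd_conv subsetD)
      ultimately show ?thesis by blast
    qed
    have "interior (- Y k) = {}"
    proof (rule ccontr)
      assume "interior (- Y k) \<noteq> {}"
      then have "interior (- Y k) \<inter> Y k \<noteq> {}" using meet[OF open_interior] by blast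
      then show False using interior_subset[of "- Y k"] by blast
    qed
    then have "- closure (Y k) = {}" by (metis interior_complement)
    then show "closure (Y k) = UNIV" by (metis double_compl Compl_empty_eq)
  next
    show "indep_family Y I" unfolding indep_family_def
    proof (intro allI impI ballI)
      fix Fs y k0 assume Fs: "finite Fs" "Fs \<subseteq> I" "\<forall>k\<in>Fs. y k \<in> Y k" "sum y Fs = 0" "k0 \<in> Fs"
      show "y k0 = 0"
      proof (rule V.indep_spans[OF indep Fs(1), of "\<lambda>k. f ` Jk k"])
        show "\<forall>k\<in>Fs. f ` Jk k \<subseteq> f ` I" unfolding Jk_def by auto
        show "\<forall>k\<in>Fs. \<forall>k'\<in>Fs. k \<noteq> k' \<longrightarrow> f ` Jk k \<inter> f ` Jk k' = {}"
        proof (intro ballI impI)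
          fix k k' assume "k \<in> Fs" "k' \<in> Fs" "k \<noteq> k'"
          show "f ` Jk k \<inter> f ` Jk k' = {}"
          proof (rule ccontr)
            assume "f ` Jk k \<inter> f ` Jk k' \<noteq> {}"
            then obtain a b where ab: "a \<in> Jk k" "b \<in> Jk k'" "f a = f b" by blast
            then have "a \<in> I" "b \<in> I" unfolding Jk_def by auto
            then have "a = b" using inj ab(3) by (simp add: inj_on_def)
            then show False using ab \<open>k \<noteq> k'\<close> unfolding Jk_def by auto
          qed
        qed
        show "\<forall>k\<in>Fs. y k \<in> V.span (f ` Jk k)" using Fs(3) unfolding Y_def .
      qed (use Fs in auto)
    qed
  qed
qed

theorem theorem2p2:
  fixes scaleR' :: "real \<Rightarrow> 'a::{ab_group_add,topological_space} \<Rightarrow> 'a"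
    and I :: "'i set"
    and scaleC' :: "complex \<Rightarrow> 'b::{ab_group_add,topological_space} \<Rightarrow> 'b"
    and J :: "'j set"
  shows "dense_subspaces_claim scaleR' I \<and> dense_subspaces_claim scaleC' J"
  by (intro conjI main_claim)

end
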